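(* Let $n$ be a positive integer and let $d\in\Delta(n)$. Write $d=(d_1,\dots,d_L)$ with $d_L>0$ the last nonzero entry, and let $q=\max_k d_k$, so that $d=(1,2,\dots,q,d_{q+1},\dots,d_L)$ with $d_{q+1}\le q$. Set $b_i=d_i-d_{i+1}$ for $q\le i<L$ and $b_L=d_L$. Then the number of partitions $\alpha\in\mathcal{P}(n)$ with $\delta(\alpha)=d$ is \[\big|\,[\,d\,]\,\big|=\prod_{i=q}^{L-1}\binom{b_i+b_{i+1}+1}{b_i+1},\] where an empty product equals $1$.
   Context: A partition of a positive integer $n$ is a finite non-increasing sequence $\alpha=(\alpha_1,\dots,\alpha_l)$ of positive integers with $\sum_i\alpha_i=n$; $\mathcal{P}(n)$ denotes the set of partitions of $n$, and we set $\alpha_i=0$ for $i>l$. The diagonal sequence of $\alpha$ is $\delta(\alpha)=(d_k)_{k\ge1}$ with $d_k=\big|\{i : 1\le i\le k,\ \alpha_i+i-1\ge k\}\big|$; only finitely many $d_k$ are nonzero and trailing zeros are omitted. $\Delta(n)=\{\delta(\alpha):\alpha\in\mathcal{P}(n)\}$, and for $d\in\Delta(n)$, $[\,d\,]=\{\alpha\in\mathcal{P}(n):\delta(\alpha)=d\}$. *)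

theory Defs
  imports Main
begin

definition is_partition :: "nat \<Rightarrow> nat list \<Rightarrow> bool" where
  "is_partition n a \<longleftrightarrow> sorted_wrt (\<ge>) a \<and> (\<forall>x\<in>set a. 0 < x) \<and> sum_list a = n"

definition partitions :: "nat \<Rightarrow> nat list set" where
  "partitions n = {a. is_partition n a}"

definition part_entry :: "nat list \<Rightarrow> nat \<Rightarrow> nat" where
  "part_entry a i = (if 1 \<le> i \<and> i \<le> length a then a ! (i - 1) else 0)"

text \<open>Diagonal sequence, as a function k \<mapsto> d_k (k \<ge> 1); the value at 0 is set to 0.
  Trailing zeros are irrelevant in this representation.\<close>
definition delta :: "nat list \<Rightarrow> nat \<Rightarrow> nat" where
  "delta a k = (if k = 0 then 0
     else card {i. 1 \<le> i \<and> i \<le> k \<and> part_entry a i + i - 1 \<ge> k})"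

definition Delta :: "nat \<Rightarrow> (nat \<Rightarrow> nat) set" where
  "Delta n = delta ` partitions n"

definition diag_class :: "nat \<Rightarrow> (nat \<Rightarrow> nat) \<Rightarrow> nat list set" where
  "diag_class n d = {a \<in> partitions n. delta a = d}"

end

theory Submission
  imports Defs "HOL-Library.Multiset"
begin

abbreviation vld :: "nat list \<Rightarrow> bool" where
  "vld w \<equiv> successively (\<lambda>x y. y \<le> Suc x) w"

definition Wd :: "(nat \<Rightarrow> nat) \<Rightarrow> nat \<Rightarrow> nat list set" where
  "Wd c T = {w. w \<noteq> [] \<and> last w = T \<and> vld w \<and> (\<forall>m. count_list w m = c m)}"

definition Fb :: "nat list \<Rightarrow> nat \<Rightarrow> nat list set" where
  "Fb u z = {w. vld w \<and> filter (\<lambda>x. x \<noteq> 0) w = u \<and> count_list w 0 = z \<and> (w = [] \<or> last w \<noteq> 0)}"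

lemma vld_filter_aux:
  "vld (x # w) \<Longrightarrow> x \<noteq> 0 \<Longrightarrow> vld (x # filter (\<lambda>x. x \<noteq> 0) w)"
proof (induction w arbitrary: x)
  case Nil
  then show ?case by simp
next
  case (Cons y w)
  show ?case
  proof (cases "y = 0")
    case True
    have "vld (x # w)"
      using Cons.prems True by (cases w) auto
    then show ?thesis using Cons True by simp
  next
    case False
    then show ?thesis using Cons by auto
  qed
qed

lemma vld_filter: "vld w \<Longrightarrow> vld (filter (\<lambda>x. x \<noteq> 0) w)"
proof (induction w)
  case Nil
  then show ?case by simp
next
  case (Cons x w)
  show ?case
  proof (cases "x = 0")
    case True
    then show ?thesis using Cons by (cases w) auto
  next
    case False
    then show ?thesis using vld_filter_aux[OF Cons.prems False] by simp
  qed
qed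

lemma vld_replicate0: "vld (replicate j (0::nat))"
  unfolding successively_conv_nth by simp

lemma zeros_split: "\<exists>j r. w = replicate j (0::nat) @ r \<and> (r = [] \<or> hd r \<noteq> 0)"
proof (induction w)
  case Nil
  then show ?case by auto
next
  case (Cons x w)
  show ?case
  proof (cases "x = 0")
    case True
    from Cons obtain j r where "w = replicate j 0 @ r" "r = [] \<or> hd r \<noteq> 0" by blast
    then show ?thesis using True by (intro exI[of _ "Suc j"] exI[of _ r]) auto
  next
    case False
    then show ?thesis by (intro exI[of _ 0] exI[of _ "x # w"]) auto
  qed
qed

lemma count_filter_nz: "count_list (filter (\<lambda>x. x \<noteq> 0) w) (Suc m) = count_list w (Suc m)"
  by (induction w) auto

lemma count_map_pred: "0 \<notin> set ys \<Longrightarrow> count_list (map (\<lambda>x. x - 1) ys) m = count_list ys (Suc m)"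
  by (induction ys) auto

lemma last_filter_nz: "w \<noteq> [] \<Longrightarrow> last w \<noteq> 0 \<Longrightarrow> last (filter (\<lambda>x. x \<noteq> (0::nat)) w) = last w"
  by (cases w rule: rev_exhaust) auto

lemma Fb_Nil: "Fb [] z = (if z = 0 then {[]} else {})"
proof -
  have A: "w = [] \<and> z = 0" if "w \<in> Fb [] z" for w
  proof -
    from that have f: "filter (\<lambda>x. x \<noteq> 0) w = []" and l: "w = [] \<or> last w \<noteq> 0"
      and c: "count_list w 0 = z"
      unfolding Fb_def by blast+
    have "w = []"
    proof (rule ccontr)
      assume "w \<noteq> []"
      then have "last w \<in> set w" by simp
      with f have "last w = 0" unfolding filter_empty_conv by blast
      with l \<open>w \<noteq> []\<close> show False by blast
    qed
    with c show ?thesis by simp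
  qed
  have B: "[] \<in> Fb [] 0" unfolding Fb_def by simp
  show ?thesis
  proof (cases "z = 0")
    case True
    have "Fb [] z = {[]}"
    proof (rule set_eqI)
      fix w show "w \<in> Fb [] z \<longleftrightarrow> w \<in> {[]}" using A B True by auto
    qed
    then show ?thesis using True by simp
  next
    case False
    have "Fb [] z = {}"
    proof (rule set_eqI)
      fix w show "w \<in> Fb [] z \<longleftrightarrow> w \<in> {}" using A False by auto
    qed
    then show ?thesis using False by simp
  qed
qed

lemma Fb_Cons:
  assumes "vld (a # u)" "a \<noteq> 0"
  shows "Fb (a # u) z = (\<Union>j\<in>(if a = 1 then {..z} else {0}). (\<lambda>w'. replicate j 0 @ a # w') ` Fb u (z - j))"
proof (intro equalityI subsetI)
  fix w assume w: "w \<in> Fb (a # u) z"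
  obtain j r where jr: "w = replicate j 0 @ r" "r = [] \<or> hd r \<noteq> 0" using zeros_split by blast
  have fw: "filter (\<lambda>x. x \<noteq> 0) w = a # u" using w by (simp add: Fb_def)
  then have "filter (\<lambda>x. x \<noteq> 0) r = a # u" using jr by simp
  then have "r \<noteq> []" by auto
  then obtain b w' where r: "r = b # w'" by (cases r) auto
  with jr have "b \<noteq> 0" by simp
  with \<open>filter (\<lambda>x. x \<noteq> 0) r = a # u\<close> r have ba: "b = a" and fw': "filter (\<lambda>x. x \<noteq> 0) w' = u" by auto
  have cnt: "count_list w 0 = j + count_list w' 0" using jr r \<open>b \<noteq> 0\<close>
    by (simp add: count_list_eq_length_filter)
  have vw: "vld w" using w by (simp add: Fb_def)
  then have "vld (b # w')" using jr r by (simp add: successively_append_iff)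
  then have vw': "vld w'" by (cases w') auto
  have lw': "w' = [] \<or> last w' \<noteq> 0" using w jr r by (cases "w' = []") (auto simp: Fb_def)
  have jz: "j \<le> z" using w cnt by (simp add: Fb_def)
  have ja: "j = 0 \<or> a = 1"
  proof (cases "j = 0")
    case False
    have *: "vld (replicate j 0 @ a # w')" using vw jr r ba by simp
    have "a \<le> Suc (last (replicate j (0::nat)))" using * False unfolding successively_append_iff by simp
    then have "a \<le> Suc 0" using False by simp
    then show ?thesis using assms(2) by simp
  qed simp
  have cz: "count_list w 0 = z" using w by (simp add: Fb_def)
  have "count_list w' 0 = z - j" using cz cnt by linarith
  then have "w' \<in> Fb u (z - j)" using vw' fw' lw' by (simp add: Fb_def)
  moreover have "j \<in> (if a = 1 then {..z} else {0})" using ja jz by auto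
  ultimately show "w \<in> (\<Union>j\<in>(if a = 1 then {..z} else {0}). (\<lambda>w'. replicate j 0 @ a # w') ` Fb u (z - j))"
    using jr r ba by blast
next
  fix w assume "w \<in> (\<Union>j\<in>(if a = 1 then {..z} else {0}). (\<lambda>w'. replicate j 0 @ a # w') ` Fb u (z - j))"
  then obtain j w' where j: "j \<in> (if a = 1 then {..z} else {0})" and w': "w' \<in> Fb u (z - j)"
    and w: "w = replicate j 0 @ a # w'" by blast
  have jz: "j \<le> z" and ja: "j = 0 \<or> a = 1" using j by (auto split: if_splits)
  have fw': "filter (\<lambda>x. x \<noteq> 0) w' = u" and vw': "vld w'" and cw': "count_list w' 0 = z - j"
    and lw': "w' = [] \<or> last w' \<noteq> 0" using w' by (auto simp: Fb_def)
  have hd: "hd w' \<le> Suc a" if "w' \<noteq> []"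
  proof (cases "hd w' = 0")
    case False
    from that obtain y ys where "w' = y # ys" by (cases w') auto
    with False fw' have "u = y # filter (\<lambda>x. x \<noteq> 0) ys" by simp
    with assms(1) \<open>w' = y # ys\<close> show ?thesis by simp
  qed simp
  have "vld (a # w')" using hd vw' by (auto simp: successively_Cons)
  then have "vld w" using w ja vld_replicate0[of j] by (auto simp: successively_append_iff)
  moreover have "filter (\<lambda>x. x \<noteq> 0) w = a # u" using w fw' assms(2) by simp
  moreover have "count_list w 0 = z" using w cw' jz assms(2) by (simp add: count_list_eq_length_filter)
  moreover have "w = [] \<or> last w \<noteq> 0" using w lw' assms(2) by auto
  ultimately show "w \<in> Fb (a # u) z" by (simp add: Fb_def)
qed

lemma Fb_card:
  assumes "vld u" "0 \<notin> set u"
  shows "finite (Fb u z) \<and> card (Fb u z) = (z + count_list u 1 - 1) choose z"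
  using assms
proof (induction u arbitrary: z)
  case Nil
  then show ?case by (simp add: Fb_Nil)
next
  case (Cons a u)
  have vu: "vld u" using Cons.prems by (cases u) auto
  have a0: "a \<noteq> 0" using Cons.prems by auto
  have IH: "finite (Fb u z') \<and> card (Fb u z') = (z' + count_list u 1 - 1) choose z'" for z'
    using Cons.IH vu Cons.prems by auto
  let ?J = "if a = 1 then {..z} else {0}"
  let ?f = "\<lambda>j. (\<lambda>w'. replicate j 0 @ a # w') ` Fb u (z - j)"
  have eq: "Fb (a # u) z = (\<Union>j\<in>?J. ?f j)" using Fb_Cons[OF Cons.prems(1) a0] .
  have fin: "finite (?f j)" for j using IH by blast
  have inj: "inj_on (\<lambda>w'. replicate j 0 @ a # w') X" for j X by (rule inj_onI) simp
  have cardf: "card (?f j) = (z - j + count_list u 1 - 1) choose (z - j)" for j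
    using IH card_image[OF inj] by metis
  have disj: "?f i \<inter> ?f j = {}" if "i \<noteq> j" for i j
  proof (rule ccontr)
    assume "?f i \<inter> ?f j \<noteq> {}"
    then obtain x y where "replicate i 0 @ a # x = replicate j 0 @ a # y" by blast
    then have "length (takeWhile (\<lambda>x. x = 0) (replicate i 0 @ a # x)) = length (takeWhile (\<lambda>x. x = 0) (replicate j 0 @ a # y))"
      by simp
    then have "i = j" using a0 by (simp add: takeWhile_append)
    with that show False by simp
  qed
  have fJ: "finite ?J" by simp
  have "card (Fb (a # u) z) = (\<Sum>j\<in>?J. card (?f j))"
    unfolding eq by (rule card_UN_disjoint[OF fJ]) (use fin disj in auto)
  also have "\<dots> = (z + count_list (a # u) 1 - 1) choose z"
  proof (cases "a = 1")
    case False
    then show ?thesis using cardf[of 0] by simp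
  next
    case True
    let ?k = "count_list u 1"
    have "(\<Sum>j\<in>?J. card (?f j)) = (\<Sum>j\<in>?J. (z - j + ?k - 1) choose (z - j))"
      by (rule sum.cong[OF refl]) (rule cardf)
    also have "\<dots> = (\<Sum>j\<le>z. (z - j + ?k - 1) choose (z - j))"
      using True by simp
    also have "\<dots> = (\<Sum>i\<le>z. (i + ?k - 1) choose i)"
      by (rule sum.reindex_bij_witness[of _ "\<lambda>i. z - i" "\<lambda>i. z - i"]) auto
    also have "\<dots> = (z + ?k) choose z"
    proof (cases "?k = 0")
      case True
      have "(\<Sum>i\<le>z. (i + ?k - 1) choose i) = (\<Sum>i\<in>{0}. (i + ?k - 1) choose i)"
        by (rule sum.mono_neutral_right) (use True in auto)
      then show ?thesis using True by simp
    next
      case False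
      have "(\<Sum>i\<le>z. (i + ?k - 1) choose i) = (\<Sum>i\<le>z. ((?k - 1) + i) choose i)"
        using False by (intro sum.cong refl) (simp add: add.commute)
      also have "\<dots> = Suc (?k - 1 + z) choose z" by (rule sum_choose_lower)
      finally show ?thesis using False by (simp add: add.commute)
    qed
    finally show ?thesis using True by simp
  qed
  finally show ?case using eq fin fJ by auto
qed


definition dec :: "nat list \<Rightarrow> nat list" where
  "dec w = map (\<lambda>x. x - 1) (filter (\<lambda>x. x \<noteq> 0) w)"

lemma count_replicate_same: "count_list (replicate n x) x = n"
  by (induction n) auto

lemma Wd_0:
  assumes "1 \<le> c 0" "\<forall>m>0. c m = 0"
  shows "Wd c 0 = {replicate (c 0) 0}"
proof (rule set_eqI)
  fix w
  show "w \<in> Wd c 0 \<longleftrightarrow> w \<in> {replicate (c 0) 0}"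
  proof
    assume w: "w \<in> Wd c 0"
    have cw: "count_list w m = c m" for m using w unfolding Wd_def by blast
    have s0: "y = 0" if "y \<in> set w" for y
    proof (rule ccontr)
      assume "y \<noteq> 0"
      have "count_list w y \<noteq> 0" using that by (simp add: count_list_0_iff)
      then show False using cw[of y] assms(2) \<open>y \<noteq> 0\<close> by simp
    qed
    then have "w = replicate (length w) 0" by (intro replicate_eqI) auto
    moreover have "length w = c 0"
    proof -
      have "count_list w 0 = length w"
        by (subst \<open>w = replicate (length w) 0\<close>) (rule count_replicate_same)
      then show ?thesis using cw[of 0] by simp
    qed
    ultimately show "w \<in> {replicate (c 0) 0}" by simp
  next
    assume "w \<in> {replicate (c 0) 0}"
    then have w: "w = replicate (c 0) 0" by simp
    have "w \<noteq> []" using w assms(1) by simp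
    moreover have "last w = 0" using w assms(1) by simp
    moreover have "vld w" using w vld_replicate0 by simp
    moreover have "count_list w m = c m" for m
    proof (cases "m = 0")
      case True then show ?thesis using w count_replicate_same by simp
    next
      case False then show ?thesis using w assms(2) by simp
    qed
    ultimately show "w \<in> Wd c 0" unfolding Wd_def by blast
  qed
qed

lemma map_Suc_dec: "map Suc (dec w) = filter (\<lambda>x. x \<noteq> 0) w"
  unfolding dec_def by (induction w) auto

lemma vld_dec: "vld w \<Longrightarrow> vld (dec w)"
proof -
  assume "vld w"
  then have v: "vld (filter (\<lambda>x. x \<noteq> 0) w)" by (rule vld_filter)
  have "successively (\<lambda>x y. y - 1 \<le> Suc (x - 1)) (filter (\<lambda>x. x \<noteq> 0) w)"
    by (rule successively_mono[OF v]) auto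
  then show ?thesis unfolding dec_def successively_map .
qed

lemma Wd_Suc_eq:
  "Wd c (Suc T) = (\<Union>v\<in>Wd (\<lambda>m. c (Suc m)) T. Fb (map Suc v) (c 0))"
proof (intro equalityI subsetI)
  fix w assume w: "w \<in> Wd c (Suc T)"
  have wne: "w \<noteq> []" and lw: "last w = Suc T" and vw: "vld w" and cw: "\<And>m. count_list w m = c m"
    using w unfolding Wd_def by blast+
  let ?v = "dec w"
  have f: "filter (\<lambda>x. x \<noteq> 0) w = map Suc ?v" by (simp add: map_Suc_dec)
  have lf: "last (filter (\<lambda>x. x \<noteq> 0) w) = Suc T" using last_filter_nz[OF wne] lw by simp
  have fne: "filter (\<lambda>x. x \<noteq> 0) w \<noteq> []"
  proof
    assume "filter (\<lambda>x. x \<noteq> 0) w = []"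
    then have "\<forall>x\<in>set w. x = 0" unfolding filter_empty_conv by blast
    then show False using wne lw by (metis last_in_set nat.distinct(1))
  qed
  have vne: "?v \<noteq> []" using fne f by auto
  have "last (map Suc ?v) = Suc T" using lf f by simp
  then have lv: "last ?v = T" using vne by (simp add: last_map)
  have cv: "count_list ?v m = c (Suc m)" for m
  proof -
    have "count_list ?v m = count_list (filter (\<lambda>x. x \<noteq> 0) w) (Suc m)"
      unfolding dec_def by (rule count_map_pred) simp
    also have "\<dots> = count_list w (Suc m)" by (rule count_filter_nz)
    finally show ?thesis using cw by simp
  qed
  have "?v \<in> Wd (\<lambda>m. c (Suc m)) T"
    unfolding Wd_def using vne lv vld_dec[OF vw] cv by blast
  moreover have "w \<in> Fb (map Suc ?v) (c 0)"
    unfolding Fb_def using vw f cw[of 0] lw by simp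
  ultimately show "w \<in> (\<Union>v\<in>Wd (\<lambda>m. c (Suc m)) T. Fb (map Suc v) (c 0))" by blast
next
  fix w assume "w \<in> (\<Union>v\<in>Wd (\<lambda>m. c (Suc m)) T. Fb (map Suc v) (c 0))"
  then obtain v where v: "v \<in> Wd (\<lambda>m. c (Suc m)) T" and w: "w \<in> Fb (map Suc v) (c 0)" by blast
  have vne: "v \<noteq> []" and lv: "last v = T" and cv: "\<And>m. count_list v m = c (Suc m)"
    using v unfolding Wd_def by blast+
  have vw: "vld w" and f: "filter (\<lambda>x. x \<noteq> 0) w = map Suc v" and c0: "count_list w 0 = c 0"
    and lw0: "w = [] \<or> last w \<noteq> 0"
    using w unfolding Fb_def by blast+
  have wne: "w \<noteq> []" using f vne by auto
  then have lnz: "last w \<noteq> 0" using lw0 by simp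
  have "last w = last (map Suc v)" using last_filter_nz[OF wne lnz] f by simp
  then have lw: "last w = Suc T" using vne lv by (simp add: last_map)
  have cw: "count_list w m = c m" for m
  proof (cases m)
    case 0 then show ?thesis using c0 by simp
  next
    case (Suc k)
    have "count_list w (Suc k) = count_list (filter (\<lambda>x. x \<noteq> 0) w) (Suc k)"
      by (rule count_filter_nz[symmetric])
    also have "\<dots> = count_list v k" unfolding f by (rule count_list_map_conv) simp
    finally show ?thesis using Suc cv by simp
  qed
  show "w \<in> Wd c (Suc T)" unfolding Wd_def using wne lw vw cw by blast
qed

lemma Wd_card:
  "1 \<le> c T \<Longrightarrow> (\<forall>m>T. c m = 0) \<Longrightarrow>
    finite (Wd c T) \<and> card (Wd c T) = (\<Prod>m<T. (c m + c (Suc m) - 1) choose c m)"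
proof (induction T arbitrary: c)
  case 0
  then show ?case using Wd_0[of c] by simp
next
  case (Suc T)
  let ?c = "\<lambda>m. c (Suc m)"
  have IH: "finite (Wd ?c T) \<and> card (Wd ?c T) = (\<Prod>m<T. (?c m + ?c (Suc m) - 1) choose ?c m)"
    using Suc.IH[of ?c] Suc.prems by auto
  let ?F = "\<lambda>v. Fb (map Suc v) (c 0)"
  have Fv: "finite (?F v) \<and> card (?F v) = (c 0 + c 1 - 1) choose c 0" if "v \<in> Wd ?c T" for v
  proof -
    have vv: "vld v" and cv: "count_list v 0 = c 1" using that unfolding Wd_def by auto
    have "vld (map Suc v)" using vv unfolding successively_map by simp
    moreover have "0 \<notin> set (map Suc v)" by auto
    ultimately have "finite (?F v) \<and> card (?F v) = (c 0 + count_list (map Suc v) 1 - 1) choose c 0"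
      by (rule Fb_card)
    moreover have "count_list (map Suc v) 1 = c 1"
      using count_list_map_conv[of Suc v 0] cv by simp
    ultimately show ?thesis by simp
  qed
  have disj: "?F v1 \<inter> ?F v2 = {}" if "v1 \<noteq> v2" for v1 v2
  proof (rule ccontr)
    assume "?F v1 \<inter> ?F v2 \<noteq> {}"
    then obtain w where "w \<in> ?F v1" "w \<in> ?F v2" by blast
    then have "map Suc v1 = map Suc v2" unfolding Fb_def by auto
    then show False using that by simp
  qed
  have fin: "finite (Wd c (Suc T))" unfolding Wd_Suc_eq using IH Fv by blast
  have "card (Wd c (Suc T)) = (\<Sum>v\<in>Wd ?c T. card (?F v))"
    unfolding Wd_Suc_eq by (rule card_UN_disjoint) (use IH Fv disj in auto)
  also have "\<dots> = (\<Sum>v\<in>Wd ?c T. (c 0 + c 1 - 1) choose c 0)"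
    by (rule sum.cong) (use Fv in auto)
  also have "\<dots> = ((c 0 + c 1 - 1) choose c 0) * card (Wd ?c T)" by simp
  also have "\<dots> = (\<Prod>m<Suc T. (c m + c (Suc m) - 1) choose c m)"
    by (subst prod.lessThan_Suc_shift) (use IH in simp)
  finally show ?case using fin by simp
qed


definition Phi :: "nat \<Rightarrow> nat list \<Rightarrow> nat list" where
  "Phi N a = map (\<lambda>i. part_entry a (Suc i) + i) [0..<N]"

lemma delta_card: "delta a k = card {i. 1 \<le> i \<and> i \<le> k \<and> k \<le> part_entry a i + i - 1}"
  unfolding delta_def by auto

lemma count_map_upt: "count_list (map f [0..<N]) m = card {i. i < N \<and> f i = m}"
proof (induction N)
  case 0
  then show ?case by simp
next
  case (Suc N)
  have "{i. i < Suc N \<and> f i = m} = {i. i < N \<and> f i = m} \<union> (if f N = m then {N} else {})"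
    by (cases "f N = m") (auto simp: less_Suc_eq)
  then have "card {i. i < Suc N \<and> f i = m} = card {i. i < N \<and> f i = m} + (if f N = m then 1 else 0)"
    by (simp add: card_Un_disjoint)
  then show ?case using Suc by simp
qed

lemma key_identity:
  assumes "m < N"
  shows "count_list (Phi N a) m + delta a (Suc m) = delta a m + 1"
proof -
  define bt where "bt i = part_entry a i + i - 1" for i
  define S1 where "S1 = {i. 1 \<le> i \<and> i \<le> Suc m \<and> bt i = m}"
  define S2 where "S2 = {i. 1 \<le> i \<and> i \<le> Suc m \<and> Suc m \<le> bt i}"
  define S0 where "S0 = {i. 1 \<le> i \<and> i \<le> m \<and> m \<le> bt i}"
  have d0: "delta a m = card S0" unfolding S0_def bt_def delta_card ..
  have d1: "delta a (Suc m) = card S2" unfolding S2_def bt_def delta_card ..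
  have "count_list (Phi N a) m = card {i. i < N \<and> part_entry a (Suc i) + i = m}"
    unfolding Phi_def by (rule count_map_upt)
  also have "\<dots> = card (Suc ` {i. i < N \<and> part_entry a (Suc i) + i = m})"
    by (simp add: card_image)
  also have "Suc ` {i. i < N \<and> part_entry a (Suc i) + i = m} = S1"
  proof (intro equalityI subsetI)
    fix j assume "j \<in> Suc ` {i. i < N \<and> part_entry a (Suc i) + i = m}"
    then obtain i where "j = Suc i" "part_entry a (Suc i) + i = m" by blast
    then show "j \<in> S1" unfolding S1_def bt_def by auto
  next
    fix j assume "j \<in> S1"
    then have j: "1 \<le> j" "j \<le> Suc m" "part_entry a j + j - 1 = m" unfolding S1_def bt_def by auto
    then have "j = Suc (j - 1)" "j - 1 < N" "part_entry a (Suc (j - 1)) + (j - 1) = m" using assms by auto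
    then show "j \<in> Suc ` {i. i < N \<and> part_entry a (Suc i) + i = m}" by blast
  qed
  finally have c: "count_list (Phi N a) m = card S1" .
  have u: "S1 \<union> S2 = insert (Suc m) S0"
  proof (intro equalityI subsetI)
    fix i assume "i \<in> S1 \<union> S2"
    then show "i \<in> insert (Suc m) S0" unfolding S1_def S2_def S0_def by auto
  next
    fix i assume i: "i \<in> insert (Suc m) S0"
    show "i \<in> S1 \<union> S2"
    proof (cases "i = Suc m")
      case True
      then have "m \<le> bt i" unfolding bt_def by simp
      then show ?thesis using True unfolding S1_def S2_def by auto
    next
      case False
      then show ?thesis using i unfolding S1_def S2_def S0_def by auto
    qed
  qed
  have fin: "finite S1" "finite S2" "finite S0" unfolding S1_def S2_def S0_def by auto
  have "S1 \<inter> S2 = {}" unfolding S1_def S2_def by auto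
  then have "card (S1 \<union> S2) = card S1 + card S2" using fin by (simp add: card_Un_disjoint)
  moreover have "Suc m \<notin> S0" unfolding S0_def by auto
  then have "card (insert (Suc m) S0) = card S0 + 1" using fin by simp
  ultimately show ?thesis using u c d0 d1 by simp
qed

lemma delta_pos:
  assumes "1 \<le> i" "i \<le> k" "k \<le> part_entry a i + i - 1"
  shows "0 < delta a k"
proof -
  have "i \<in> {i. 1 \<le> i \<and> i \<le> k \<and> k \<le> part_entry a i + i - 1}" using assms by auto
  moreover have "finite {i. 1 \<le> i \<and> i \<le> k \<and> k \<le> part_entry a i + i - 1}" by auto
  ultimately show ?thesis unfolding delta_card by (simp add: card_gt_0_iff) blast
qed

lemma delta_zero:
  assumes "\<And>i. 1 \<le> i \<Longrightarrow> i \<le> k \<Longrightarrow> part_entry a i + i - 1 < k"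
  shows "delta a k = 0"
proof -
  have "{i. 1 \<le> i \<and> i \<le> k \<and> k \<le> part_entry a i + i - 1} = {}"
    using assms by force
  then show ?thesis unfolding delta_card by simp
qed

lemma delta_pos_ex:
  assumes "0 < delta a k"
  shows "\<exists>i. 1 \<le> i \<and> i \<le> k \<and> k \<le> part_entry a i + i - 1"
  using delta_zero[of k a] assms by force

lemma part_entry_pos:
  assumes "is_partition n a" "1 \<le> i" "i \<le> length a"
  shows "0 < part_entry a i"
  using assms unfolding is_partition_def part_entry_def by auto

lemma part_entry_ge: "length a < i \<Longrightarrow> part_entry a i = 0"
  unfolding part_entry_def by auto

lemma part_entry_antitone:
  assumes "is_partition n a" "1 \<le> i"
  shows "part_entry a (Suc i) \<le> part_entry a i"
proof (cases "Suc i \<le> length a")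
  case True
  have "sorted_wrt (\<ge>) a" using assms unfolding is_partition_def by blast
  then have st: "\<And>i j. i < j \<Longrightarrow> j < length a \<Longrightarrow> a ! j \<le> a ! i"
    unfolding sorted_wrt_iff_nth_less by blast
  have "i - 1 < i" "i < length a" using True assms(2) by auto
  then have "a ! i \<le> a ! (i - 1)" by (rule st)
  then show ?thesis using True assms(2) unfolding part_entry_def by auto
next
  case False
  then show ?thesis unfolding part_entry_def by auto
qed

lemma part_entry_inj:
  assumes "is_partition n a" "is_partition n' a'" "\<And>i. part_entry a i = part_entry a' i"
  shows "a = a'"
proof -
  have "length a = length a'"
  proof (rule ccontr)
    assume ne: "length a \<noteq> length a'"
    show False
    proof (cases "length a < length a'")
      case True
      then have "0 < part_entry a' (length a')" using part_entry_pos[OF assms(2)] by simp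
      moreover have "part_entry a (length a') = 0" using True part_entry_ge by simp
      ultimately show False using assms(3) by simp
    next
      case False
      then have lt: "length a' < length a" using ne by simp
      then have "0 < part_entry a (length a)" using part_entry_pos[OF assms(1)] by simp
      moreover have "part_entry a' (length a) = 0" using lt part_entry_ge by simp
      ultimately show False using assms(3) by simp
    qed
  qed
  moreover have "a ! i = a' ! i" if "i < length a" for i
    using assms(3)[of "Suc i"] that \<open>length a = length a'\<close> unfolding part_entry_def by simp
  ultimately show ?thesis by (simp add: nth_equalityI)
qed

lemma sum_part_entry:
  assumes "length a \<le> N"
  shows "sum_list a = (\<Sum>i<N. part_entry a (Suc i))"
proof -
  have "sum_list a = (\<Sum>i=0..<length a. a ! i)" by (rule sum_list_sum_nth)
  also have "\<dots> = (\<Sum>i<length a. part_entry a (Suc i))"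
    unfolding part_entry_def by (rule sum.cong) auto
  also have "\<dots> = (\<Sum>i<N. part_entry a (Suc i))"
    by (rule sum.mono_neutral_left) (use assms in \<open>auto simp: part_entry_def\<close>)
  finally show ?thesis .
qed

lemma sum_Phi: "sum_list (Phi N a) = (\<Sum>i<N. part_entry a (Suc i)) + (\<Sum>i<N. i)"
  unfolding Phi_def by (simp add: interv_sum_list_conv_sum_set_nat atLeast0LessThan sum.distrib)

lemma vld_Phi:
  assumes "is_partition n a"
  shows "vld (Phi N a)"
  unfolding successively_conv_nth Phi_def
  using part_entry_antitone[OF assms] by (auto simp: nth_append)

lemma vld_ge:
  assumes "vld w" "j < length w" "i \<le> j"
  shows "w ! j \<le> w ! i + (j - i)"
  using assms(2,3)
proof (induction j)
  case 0
  then show ?case by simp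
next
  case (Suc j)
  show ?case
  proof (cases "i = Suc j")
    case True then show ?thesis by simp
  next
    case False
    then have "i \<le> j" using Suc by simp
    then have "w ! j \<le> w ! i + (j - i)" using Suc by simp
    moreover have "w ! Suc j \<le> Suc (w ! j)" using successively_nth[OF assms(1) Suc.prems(1)] .
    ultimately show ?thesis using \<open>i \<le> j\<close> by simp
  qed
qed

lemma all_vals:
  assumes "vld w" "x \<in> set w" "x \<le> y" "y \<le> last w"
  shows "y \<in> set w"
  using assms
proof (induction w arbitrary: x)
  case Nil
  then show ?case by simp
next
  case (Cons z w)
  show ?case
  proof (cases "w = []")
    case True
    then show ?thesis using Cons.prems by simp
  next
    case False
    have vw: "vld w" and hz: "hd w \<le> Suc z" using Cons.prems(1) False by (auto simp: successively_Cons)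
    have lw: "last (z # w) = last w" using False by simp
    show ?thesis
    proof (cases "x \<in> set w")
      case True
      then show ?thesis using Cons.IH[OF vw True Cons.prems(3)] Cons.prems(4) lw by simp
    next
      case xw: False
      then have xz: "x = z" using Cons.prems(2) by simp
      show ?thesis
      proof (cases "y = z")
        case True then show ?thesis by simp
      next
        case False
        then have "hd w \<le> y" using hz xz Cons.prems(3) by simp
        moreover have "hd w \<in> set w" using \<open>w \<noteq> []\<close> by simp
        ultimately show ?thesis using Cons.IH[OF vw _ _] Cons.prems(4) lw by simp
      qed
    qed
  qed
qed


lemma Phi_nth: "i < N \<Longrightarrow> Phi N a ! i = part_entry a (Suc i) + i"
  unfolding Phi_def by (simp del: upt_Suc)

lemma partition_bounds:
  assumes "is_partition n a" "delta a = d" "\<And>k. 0 < d k \<Longrightarrow> k \<le> L"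
  shows "length a \<le> L" and "\<And>i. 1 \<le> i \<Longrightarrow> i \<le> length a \<Longrightarrow> part_entry a i + i - 1 \<le> L"
proof -
  show "length a \<le> L"
  proof (cases "a = []")
    case True then show ?thesis by simp
  next
    case False
    have "1 \<le> length a" using False by (cases a) auto
    then have "0 < part_entry a (length a)" by (rule part_entry_pos[OF assms(1)]) simp
    then have "0 < delta a (length a)"
      using \<open>1 \<le> length a\<close> by (intro delta_pos[of "length a"]) auto
    then show ?thesis using assms(2,3) by simp
  qed
  fix i assume i: "1 \<le> i" "i \<le> length a"
  have "0 < part_entry a i" using part_entry_pos[OF assms(1) i] .
  then have "0 < delta a (part_entry a i + i - 1)"
    using i by (intro delta_pos[of i]) auto
  then show "part_entry a i + i - 1 \<le> L" using assms(2,3) by simp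
qed

lemma Phi_props:
  assumes "is_partition n a" "delta a = d" "\<And>k. 0 < d k \<Longrightarrow> k \<le> L"
  defines "c \<equiv> (\<lambda>m. if m < L + 2 then d m + 1 - d (Suc m) else 0)"
  shows "Phi (L + 2) a \<in> Wd c (L + 1)"
proof -
  note B = partition_bounds[OF assms(1-3)]
  let ?w = "Phi (L + 2) a"
  have len: "length ?w = L + 2" unfolding Phi_def by simp
  have nth: "?w ! i = part_entry a (Suc i) + i" if "i < L + 2" for i
    using that unfolding Phi_def by (simp del: upt_Suc)
  have le: "x \<le> L + 1" if "x \<in> set ?w" for x
  proof -
    obtain i where i: "i < L + 2" "x = ?w ! i" using \<open>x \<in> set ?w\<close> len by (metis in_set_conv_nth)
    show ?thesis
    proof (cases "Suc i \<le> length a")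
      case True
      then have "part_entry a (Suc i) + Suc i - 1 \<le> L" using B(2)[of "Suc i"] by simp
      then show ?thesis using i nth by simp
    next
      case False
      then show ?thesis using i nth part_entry_ge[of a "Suc i"] by simp
    qed
  qed
  have ne: "?w \<noteq> []" using len by auto
  have "last ?w = ?w ! (L + 1)" using len ne by (simp add: last_conv_nth)
  also have "\<dots> = L + 1" using nth[of "L + 1"] part_entry_ge[of a "Suc (L + 1)"] B(1) by simp
  finally have lw: "last ?w = L + 1" .
  have cw: "count_list ?w m = c m" for m
  proof (cases "m < L + 2")
    case True
    have "count_list ?w m + delta a (Suc m) = delta a m + 1" by (rule key_identity[OF True])
    then show ?thesis using True assms(2) unfolding c_def by simp
  next
    case False
    then have "m \<notin> set ?w" using le by fastforce
    then show ?thesis using False unfolding c_def by simp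
  qed
  show ?thesis unfolding Wd_def using ne lw vld_Phi[OF assms(1)] cw by blast
qed


lemma Phi_surj:
  assumes a0: "is_partition n a0" "delta a0 = d" and bnd: "\<And>k. 0 < d k \<Longrightarrow> k \<le> L"
  defines "c \<equiv> (\<lambda>m. if m < L + 2 then d m + 1 - d (Suc m) else 0)"
  assumes w: "w \<in> Wd c (L + 1)"
  shows "\<exists>a. is_partition n a \<and> delta a = d \<and> Phi (L + 2) a = w"
proof -
  let ?w0 = "Phi (L + 2) a0"
  have w0: "?w0 \<in> Wd c (L + 1)" unfolding c_def by (rule Phi_props[OF a0 bnd])
  have cw: "\<And>m. count_list w m = c m" and vw: "vld w" and lw: "last w = L + 1" and wne: "w \<noteq> []"
    using w unfolding Wd_def by blast+
  have cw0: "\<And>m. count_list ?w0 m = c m" using w0 unfolding Wd_def by blast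
  have ms: "mset w = mset ?w0" by (rule multiset_eqI) (simp only: count_mset cw cw0)
  have len: "length w = L + 2"
    using mset_eq_length[OF ms] unfolding Phi_def by simp
  have sw: "sum_list w = sum_list ?w0" using ms by (metis sum_mset_sum_list)
  have wL: "w ! (L + 1) = L + 1" using lw wne len by (simp add: last_conv_nth)
  have ge: "i \<le> w ! i" if "i \<le> L + 1" for i
  proof -
    have "w ! (L + 1) \<le> w ! i + (L + 1 - i)" by (rule vld_ge[OF vw]) (use len that in auto)
    then show ?thesis using wL that by simp
  qed
  have wle: "x < L + 2" if "x \<in> set w" for x
  proof (rule ccontr)
    assume "\<not> x < L + 2"
    then have "c x = 0" unfolding c_def by simp
    then have "count_list w x = 0" using cw by simp
    then show False using that by (simp add: count_list_0_iff)
  qed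
  define E where "E i = w ! (min i (L + 1)) - min i (L + 1)" for i
  have Eanti: "E (Suc i) \<le> E i" for i
  proof (cases "i < L + 1")
    case True
    have "w ! Suc i \<le> Suc (w ! i)" by (rule successively_nth[OF vw]) (use True len in simp)
    then show ?thesis using True unfolding E_def by simp
  next
    case False
    then show ?thesis unfolding E_def by simp
  qed
  have Emono: "E j \<le> E i" if "i \<le> j" for i j
    using lift_Suc_antimono_le[of E, OF Eanti that] .
  have EL: "E (L + 1) = 0" unfolding E_def using wL by simp
  define l where "l = (LEAST j. E j = 0)"
  have El: "E l = 0" unfolding l_def by (rule LeastI[of _ "L + 1"]) (rule EL)
  have lL: "l \<le> L + 1" unfolding l_def by (rule Least_le) (rule EL)
  have Epos: "0 < E j" if "j < l" for j
    using not_less_Least[of j "\<lambda>j. E j = 0"] that unfolding l_def by simp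
  have Ezero: "E j = 0" if "l \<le> j" for j using Emono[OF that] El by simp
  define a where "a = map E [0..<l]"
  have la: "length a = l" unfolding a_def by simp
  have pe: "part_entry a (Suc i) = E i" for i
  proof (cases "i < l")
    case True then show ?thesis unfolding part_entry_def a_def by simp
  next
    case False then show ?thesis using Ezero[of i] unfolding part_entry_def a_def by simp
  qed
  have Phiw: "Phi (L + 2) a = w"
  proof (rule nth_equalityI)
    show "length (Phi (L + 2) a) = length w" using len unfolding Phi_def by simp
  next
    fix i assume "i < length (Phi (L + 2) a)"
    then have i: "i < L + 2" unfolding Phi_def by simp
    have "Phi (L + 2) a ! i = part_entry a (Suc i) + i" using i unfolding Phi_def by (simp del: upt_Suc)
    also have "\<dots> = E i + i" by (simp add: pe)
    also have "\<dots> = w ! i" using ge[of i] i unfolding E_def by simp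
    finally show "Phi (L + 2) a ! i = w ! i" .
  qed
  have sorted: "sorted_wrt (\<ge>) a"
    unfolding sorted_wrt_iff_nth_less a_def using Emono by simp
  have posa: "\<forall>x\<in>set a. 0 < x" unfolding a_def using Epos by auto
  have "sum_list (Phi (L + 2) a) = sum_list ?w0" using Phiw sw by simp
  then have "(\<Sum>i<L + 2. part_entry a (Suc i)) = (\<Sum>i<L + 2. part_entry a0 (Suc i))"
    unfolding sum_Phi by simp
  moreover have "sum_list a = (\<Sum>i<L + 2. part_entry a (Suc i))"
    by (rule sum_part_entry) (use la lL in simp)
  moreover have "sum_list a0 = (\<Sum>i<L + 2. part_entry a0 (Suc i))"
    by (rule sum_part_entry) (use partition_bounds(1)[OF a0 bnd] in simp)
  moreover have "sum_list a0 = n" using a0(1) unfolding is_partition_def by blast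
  ultimately have suma: "sum_list a = n" by simp
  have ipa: "is_partition n a" unfolding is_partition_def using sorted posa suma by blast
  have d0: "d 0 = 0" using a0(2) unfolding delta_def by auto
  have low: "delta a m = d m" if "m \<le> L + 2" for m
    using that
  proof (induction m)
    case 0
    then show ?case using d0 unfolding delta_def by simp
  next
    case (Suc m)
    then have m: "m < L + 2" by simp
    have k1: "count_list (Phi (L + 2) a) m + delta a (Suc m) = delta a m + 1" by (rule key_identity[OF m])
    have k2: "count_list ?w0 m + delta a0 (Suc m) = delta a0 m + 1" by (rule key_identity[OF m])
    have "count_list (Phi (L + 2) a) m = count_list ?w0 m" using Phiw cw cw0 by simp
    then show ?case using k1 k2 Suc.IH m a0(2) by simp
  qed
  have high: "delta a m = d m" if "L + 2 < m" for m
  proof -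
    have "delta a m = 0"
    proof (rule delta_zero)
      fix i assume i: "1 \<le> i" "i \<le> m"
      show "part_entry a i + i - 1 < m"
      proof (cases "i \<le> L + 2")
        case True
        have "i - 1 < L + 2" using True i by simp
        then have "Phi (L + 2) a ! (i - 1) = part_entry a (Suc (i - 1)) + (i - 1)"
          by (rule Phi_nth)
        then have "w ! (i - 1) = part_entry a i + i - 1" using Phiw i by simp
        moreover have "w ! (i - 1) \<in> set w" using True i len by simp
        ultimately show ?thesis using wle that by fastforce
      next
        case False
        then have "part_entry a i = 0" using part_entry_ge[of a i] la lL by simp
        then show ?thesis using i by simp
      qed
    qed
    moreover have "d m = 0" using bnd[of m] that by fastforce
    ultimately show ?thesis by simp
  qed
  have "delta a = d"
  proof
    fix m show "delta a m = d m" using low high by (cases "m \<le> L + 2") auto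
  qed
  then show ?thesis using ipa Phiw by blast
qed


theorem theorem4p6:
  fixes n :: nat and d :: "nat \<Rightarrow> nat"
  assumes "0 < n" and "d \<in> Delta n"
  defines "L \<equiv> GREATEST k. 0 < d k"
  defines "q \<equiv> Max (d ` {1..L})"
  defines "b \<equiv> (\<lambda>i. if i < L then d i - d (Suc i) else d L)"
  shows "card (diag_class n d) = (\<Prod>i\<in>{q..<L}. (b i + b (Suc i) + 1) choose (b i + 1))"
proof -
  obtain a0 where a0p: "a0 \<in> partitions n" and da0: "delta a0 = d"
    using assms(2) unfolding Delta_def by blast
  have ip0: "is_partition n a0" using a0p unfolding partitions_def by simp
  have a0ne: "a0 \<noteq> []" using ip0 assms(1) unfolding is_partition_def by auto
  have pe1: "0 < part_entry a0 1"
    by (rule part_entry_pos[OF ip0]) (use a0ne in \<open>auto simp: Suc_le_eq\<close>)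
  have bound0: "k \<le> sum_list a0 + length a0" if dk: "0 < d k" for k
  proof -
    obtain i where i: "1 \<le> i" "i \<le> k" "k \<le> part_entry a0 i + i - 1"
      using delta_pos_ex[of a0 k] dk da0 by auto
    show ?thesis
    proof (cases "i \<le> length a0")
      case True
      then have "part_entry a0 i = a0 ! (i - 1)" using i unfolding part_entry_def by simp
      moreover have "a0 ! (i - 1) \<le> sum_list a0" using True i by (intro elem_le_sum_list) simp
      ultimately show ?thesis using i True by simp
    next
      case False
      then have "part_entry a0 i = 0" using part_entry_ge by simp
      then show ?thesis using i by simp
    qed
  qed
  have d1: "0 < d 1" using delta_pos[of 1 1 a0] pe1 da0 by simp
  have hL: "0 < d L" unfolding L_def by (rule GreatestI_nat[of _ 1]) (use d1 bound0 in auto)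
  have hL2: "k \<le> L" if "0 < d k" for k
    unfolding L_def by (rule Greatest_le_nat[of _ k "sum_list a0 + length a0"]) (use that bound0 in auto)
  have dz: "d k = 0" if "L < k" for k using hL2[of k] that by fastforce
  define c where "c = (\<lambda>m. if m < L + 2 then d m + 1 - d (Suc m) else 0)"
  let ?D = "diag_class n d"
  have inD: "is_partition n a \<and> delta a = d" if "a \<in> ?D" for a
    using that unfolding diag_class_def partitions_def by simp
  have inj: "inj_on (Phi (L + 2)) ?D"
  proof (rule inj_onI)
    fix a a' assume a: "a \<in> ?D" and a': "a' \<in> ?D" and eq: "Phi (L + 2) a = Phi (L + 2) a'"
    have ia: "is_partition n a" "delta a = d" using inD[OF a] by auto
    have ia': "is_partition n a'" "delta a' = d" using inD[OF a'] by auto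
    have la: "length a \<le> L" by (rule partition_bounds(1)[OF ia hL2])
    have la': "length a' \<le> L" by (rule partition_bounds(1)[OF ia' hL2])
    have "part_entry a i = part_entry a' i" for i
    proof (cases "i = 0")
      case True then show ?thesis unfolding part_entry_def by simp
    next
      case False
      show ?thesis
      proof (cases "i \<le> L + 2")
        case True
        have "i - 1 < L + 2" using True by simp
        then have "Phi (L + 2) a ! (i - 1) = Phi (L + 2) a' ! (i - 1)" using eq by simp
        then show ?thesis using Phi_nth[OF \<open>i - 1 < L + 2\<close>, of a] Phi_nth[OF \<open>i - 1 < L + 2\<close>, of a'] False
          by simp
      next
        case False
        then show ?thesis using part_entry_ge[of a i] part_entry_ge[of a' i] la la' by simp
      qed
    qed
    then show "a = a'" by (rule part_entry_inj[OF ia(1) ia'(1)])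
  qed
  have img: "Phi (L + 2) ` ?D = Wd c (L + 1)"
  proof (intro equalityI subsetI)
    fix w assume "w \<in> Phi (L + 2) ` ?D"
    then obtain a where a: "a \<in> ?D" and w: "w = Phi (L + 2) a" by blast
    have ia: "is_partition n a" "delta a = d" using inD[OF a] by auto
    show "w \<in> Wd c (L + 1)" unfolding w c_def by (rule Phi_props[OF ia hL2])
  next
    fix w assume w: "w \<in> Wd c (L + 1)"
    obtain a where a: "is_partition n a" "delta a = d" "Phi (L + 2) a = w"
      using Phi_surj[OF ip0 da0 hL2, of w] w unfolding c_def by blast
    then have "a \<in> ?D" unfolding diag_class_def partitions_def by simp
    then show "w \<in> Phi (L + 2) ` ?D" using a(3) by blast
  qed
  have cL1: "c (L + 1) = 1" unfolding c_def using dz[of "L + 1"] dz[of "L + 2"] by simp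
  have cbig: "\<forall>m>L + 1. c m = 0" unfolding c_def by simp
  have "card ?D = card (Wd c (L + 1))" using card_image[OF inj] img by simp
  also have "\<dots> = (\<Prod>m<L + 1. (c m + c (Suc m) - 1) choose c m)"
    using Wd_card[of c "L + 1"] cL1 cbig by simp
  finally have cardD: "card ?D = (\<Prod>m<L + 1. (c m + c (Suc m) - 1) choose c m)" .
  let ?w0 = "Phi (L + 2) a0"
  have w0: "?w0 \<in> Wd c (L + 1)" unfolding c_def by (rule Phi_props[OF ip0 da0 hL2])
  have cw0: "\<And>m. count_list ?w0 m = c m" and vw0: "vld ?w0" and lw0: "last ?w0 = L + 1"
    and w0ne: "?w0 \<noteq> []"
    using w0 unfolding Wd_def by blast+
  have rec: "c m + d (Suc m) = d m + 1" if "m < L + 2" for m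
    using key_identity[OF that, of a0] cw0[of m] da0 by simp
  have d0: "d 0 = 0" using da0 unfolding delta_def by auto
  define mu where "mu = Min (set ?w0)"
  have mu_in: "mu \<in> set ?w0" unfolding mu_def using w0ne by simp
  have mu_le: "mu \<le> x" if "x \<in> set ?w0" for x unfolding mu_def using that by simp
  have muL1: "mu \<le> L + 1" using mu_le[of "L + 1"] lw0 w0ne by (metis last_in_set)
  have cpos: "1 \<le> c m" if "mu \<le> m" "m \<le> L + 1" for m
  proof -
    have "m \<in> set ?w0" by (rule all_vals[OF vw0 mu_in that(1)]) (use that(2) lw0 in simp)
    then have "count_list ?w0 m \<noteq> 0" by (simp add: count_list_0_iff)
    then show ?thesis using cw0 by (simp add: Suc_leI)
  qed
  have czero: "c m = 0" if "m < mu" for m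
  proof -
    have "m \<notin> set ?w0" using mu_le that by fastforce
    then show ?thesis using cw0[of m] by (simp add: count_list_0_iff)
  qed
  have dlow: "d m = m" if "m \<le> mu" for m
    using that
  proof (induction m)
    case 0 then show ?case using d0 by simp
  next
    case (Suc m)
    then have "m < mu" by simp
    then have "c m = 0" by (rule czero)
    moreover have "m < L + 2" using \<open>m < mu\<close> muL1 by simp
    ultimately show ?case using rec[of m] Suc by simp
  qed
  have ddec: "d (Suc m) \<le> d m" if "mu \<le> m" "m \<le> L + 1" for m
    using rec[of m] cpos[OF that] that by simp
  have mu1: "1 \<le> mu"
  proof (rule ccontr)
    assume "\<not> 1 \<le> mu"
    then have "mu = 0" by simp
    then have "1 \<le> c 0" using cpos[of 0] by simp
    moreover have "c 0 + d 1 = d 0 + 1" using rec[of 0] by simp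
    ultimately show False using d0 d1 by simp
  qed
  have dmu: "d mu = mu" using dlow by simp
  have muL: "mu \<le> L" using hL2[of mu] dmu mu1 by simp
  have dhigh: "d k \<le> d mu" if "mu \<le> k" "k \<le> L + 2" for k
    using that
  proof (induction k)
    case 0 then show ?case by simp
  next
    case (Suc k)
    show ?case
    proof (cases "mu \<le> k")
      case True
      then have "d (Suc k) \<le> d k" using ddec[of k] Suc.prems by simp
      then show ?thesis using Suc.IH True Suc.prems by simp
    next
      case False
      then have "Suc k = mu" using Suc.prems by simp
      then show ?thesis by simp
    qed
  qed
  have qmu: "q = mu" unfolding q_def
  proof (rule Max_eqI)
    show "finite (d ` {1..L})" by simp
  next
    fix y assume "y \<in> d ` {1..L}"
    then obtain k where k: "k \<in> {1..L}" "y = d k" by blast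
    show "y \<le> mu"
    proof (cases "k \<le> mu")
      case True then show ?thesis using dlow[of k] k by simp
    next
      case False then show ?thesis using dhigh[of k] k dmu by simp
    qed
  next
    show "mu \<in> d ` {1..L}" using mu1 muL dmu by force
  qed
  let ?g = "\<lambda>m. (c m + c (Suc m) - 1) choose c m"
  have "(\<Prod>m<L + 1. ?g m) = (\<Prod>m\<in>{q..<L}. ?g m)"
  proof (rule prod.mono_neutral_right)
    show "finite {..<L + 1}" by simp
  next
    show "{q..<L} \<subseteq> {..<L + 1}" by auto
  next
    show "\<forall>i\<in>{..<L + 1} - {q..<L}. ?g i = 1"
    proof
      fix i assume i: "i \<in> {..<L + 1} - {q..<L}"
      show "?g i = 1"
      proof (cases "i < q")
        case True
        then have "c i = 0" using czero qmu by simp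
        then show ?thesis by simp
      next
        case False
        then have "i = L" using i by auto
        then show ?thesis using cL1 by simp
      qed
    qed
  qed
  also have "\<dots> = (\<Prod>i\<in>{q..<L}. (b i + b (Suc i) + 1) choose (b i + 1))"
  proof (rule prod.cong[OF refl])
    fix i assume i: "i \<in> {q..<L}"
    have ci: "c i = b i + 1"
      using ddec[of i] rec[of i] i qmu unfolding b_def by simp
    have ci1: "c (Suc i) = b (Suc i) + 1"
    proof (cases "Suc i < L")
      case True
      then show ?thesis using ddec[of "Suc i"] rec[of "Suc i"] i qmu unfolding b_def by simp
    next
      case False
      then have "Suc i = L" using i by simp
      then show ?thesis using rec[of L] dz[of "Suc L"] unfolding b_def by simp
    qed
    show "?g i = (b i + b (Suc i) + 1) choose (b i + 1)" using ci ci1 by simp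
  qed
  finally show ?thesis using cardD by simp
qed

end
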